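(* Let $n\ge 64$ be a power of $2$ and let $z\in\mathbb{R}^n$ satisfy $\sum_{i}z(i)=0$ and $\|z\|_1=2$, so that $\sum_i z^+(i)=1$. Suppose $$\sum_{j = 1}^{\log (n/32)} \sum_{i \in B_j(z^+)} z^+(i) \geq \frac35 .$$ Let $j$ be chosen uniformly at random from $\{1,\dots,\log(n/32)\}$, let $r=2^j$, and let $S\subseteq[n]$ include each element independently with probability $1/r$. Then with probability at least $\frac{3}{20\log(n/32)}$ there exists $i\in S$ with $z^+(i)\geq 1/r$.
   Context: $z^+(i)=\max(0,z(i))$. For a nonnegative vector $x\in\mathbb{R}^n$ and integer $j\ge1$, the $j$-th bin is $B_j(x)=\{i: 2^{-j}\le x(i)<2^{-j+1}\}$. $\log$ is base 2. *)

theory Defs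
  imports "HOL-Probability.Probability"
begin

text \<open>Vectors in R^n are functions nat => real on the index set {1..n}.\<close>

definition pos_part :: "(nat \<Rightarrow> real) \<Rightarrow> nat \<Rightarrow> real" where
  "pos_part z i = max 0 (z i)"

definition bin :: "nat \<Rightarrow> (nat \<Rightarrow> real) \<Rightarrow> nat \<Rightarrow> nat set" where
  "bin n x j = {i \<in> {1..n}. 2 powr (- real j) \<le> x i \<and> x i < 2 powr (- real j + 1)}"

definition random_subset :: "nat \<Rightarrow> real \<Rightarrow> nat set pmf" where
  "random_subset n p = map_pmf (\<lambda>f. {i \<in> {1..n}. f i}) (Pi_pmf {1..n} False (\<lambda>_. bernoulli_pmf p))"

definition sampling_experiment :: "nat \<Rightarrow> nat \<Rightarrow> (nat \<times> nat set) pmf" where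
  "sampling_experiment n L =
     bind_pmf (pmf_of_set {1..L}) (\<lambda>j.
       map_pmf (\<lambda>S. (j, S)) (random_subset n (1 / 2 ^ j)))"

end

theory Submission imports Defs begin


lemma prob_bind_pmf:
  "measure_pmf.prob (bind_pmf M f) X = measure_pmf.expectation M (\<lambda>x. measure_pmf.prob (f x) X)"
  unfolding measure_pmf_bind
  by (rule measure_pmf.measure_bind[where N="count_space UNIV"])
     (auto simp: measurable_def space_subprob_algebra prob_space_imp_subprob_space
                 measure_pmf.prob_space_axioms)

lemma prob_random_subset_hit:
  assumes "B \<subseteq> {1..n}" "0 \<le> p" "p \<le> 1"
  shows "measure_pmf.prob (random_subset n p) {S. S \<inter> B \<noteq> {}} = 1 - (1 - p) ^ card B"
proof -
  have fin: "finite B" using assms(1) finite_subset by blast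
  have "measure_pmf.prob (random_subset n p) {S. S \<inter> B = {}}
     = measure_pmf.prob (Pi_pmf {1..n} False (\<lambda>_. bernoulli_pmf p))
          (Pi {1..n} (\<lambda>i. if i \<in> B then {False} else UNIV))"
    unfolding random_subset_def measure_map_pmf
    by (rule arg_cong[where f="measure_pmf.prob _"]) (use assms(1) in \<open>auto simp: Pi_def\<close>)
  also have "\<dots> = (\<Prod>i\<in>{1..n}. measure_pmf.prob (bernoulli_pmf p) (if i \<in> B then {False} else UNIV))"
    by (rule measure_Pi_pmf_Pi) simp
  also have "\<dots> = (\<Prod>i\<in>{1..n}. if i \<in> B then 1 - p else 1)"
    by (rule prod.cong) (use assms in \<open>auto simp: measure_pmf_single\<close>)
  also have "\<dots> = (\<Prod>i\<in>B. 1 - p)"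
  proof -
    have e: "{Suc 0..n} \<inter> B = B" using assms(1) by auto
    show ?thesis by (subst prod.If_cases) (simp_all add: e)
  qed
  also have "\<dots> = (1 - p) ^ card B" by simp
  finally have "measure_pmf.prob (random_subset n p) {S. S \<inter> B = {}} = (1 - p) ^ card B" .
  moreover have "{S. S \<inter> B \<noteq> {}} = UNIV - {S. S \<inter> B = {}}" by auto
  ultimately show ?thesis
    using measure_pmf.prob_compl[where M="random_subset n p" and A="{S. S \<inter> B = {}}"] by simp
qed

lemma bern_aux:
  fixes p :: real assumes "0 \<le> p" "p \<le> 1"
  shows "(1 - p) ^ m * (1 + m * p) \<le> 1"
proof (induction m)
  case 0 then show ?case by simp
next
  case (Suc m)
  have h: "(1 - p) * (1 + (m + 1) * p) \<le> 1 + m * p"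
    using assms by (simp add: algebra_simps)
  have "(1 - p) ^ Suc m * (1 + real (Suc m) * p) = (1 - p) ^ m * ((1 - p) * (1 + (m + 1) * p))"
    by (simp add: algebra_simps)
  also have "\<dots> \<le> (1 - p) ^ m * (1 + m * p)"
    using h assms by (intro mult_left_mono) auto
  finally show ?case using Suc by linarith
qed


lemma hit_lower:
  fixes w p :: real and m :: nat
  assumes "0 \<le> p" "p \<le> 1" "w \<le> 2 * (m * p)" "w \<le> 1"
  shows "1 - (1 - p) ^ m \<ge> w / 3"
proof -
  define x where "x = m * p"
  have x0: "x \<ge> 0" using assms by (simp add: x_def)
  have b: "(1 - p) ^ m * (1 + x) \<le> 1" using bern_aux[OF assms(1,2)] by (simp add: x_def)
  have "w * x \<le> 1 * x" using assms(4) x0 by (rule mult_right_mono)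
  hence "w * (1 + x) \<le> 3 * x" using assms x0 unfolding x_def[symmetric]
    by (simp add: algebra_simps)
  hence "w / 3 \<le> x / (1 + x)" using x0 by (simp add: field_simps)
  also have "x / (1 + x) \<le> 1 - (1 - p) ^ m" using b x0 by (simp add: field_simps)
  finally show ?thesis .
qed

theorem lemma4p3:
  fixes n k :: nat and z :: "nat \<Rightarrow> real"
  assumes "n = 2 ^ k" and "n \<ge> 64"
    and "(\<Sum>i\<in>{1..n}. z i) = 0"
    and "(\<Sum>i\<in>{1..n}. \<bar>z i\<bar>) = 2"
    and "(\<Sum>j\<in>{1..nat \<lfloor>log 2 (real n / 32)\<rfloor>}. \<Sum>i\<in>bin n (pos_part z) j. pos_part z i) \<ge> 3 / 5"
  shows "measure_pmf.prob (sampling_experiment n (nat \<lfloor>log 2 (real n / 32)\<rfloor>))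
           {(j, S). \<exists>i\<in>S. pos_part z i \<ge> 1 / 2 ^ j}
         \<ge> 3 / (20 * log 2 (real n / 32))"
proof -
  define L' where "L' = log 2 (real n / 32)"
  define L where "L = nat \<lfloor>L'\<rfloor>"
  define w where "w j = (\<Sum>i\<in>bin n (pos_part z) j. pos_part z i)" for j
  define P where "P j = measure_pmf.prob (random_subset n (1 / 2 ^ j)) {S. \<exists>i\<in>S. pos_part z i \<ge> 1 / 2 ^ j}" for j :: nat
  have L'1: "L' \<ge> 1"
  proof -
    have "real n / 32 \<ge> 2" using assms(2) by simp
    hence "log 2 (real n / 32) \<ge> log 2 2" by (subst log_le_cancel_iff) auto
    thus ?thesis by (simp add: L'_def)
  qed
  have L1: "L \<ge> 1" using L'1 unfolding L_def by linarith
  have LL': "real L \<le> L'" using L'1 unfolding L_def by linarith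
  have pp: "pos_part z i = (z i + \<bar>z i\<bar>) / 2" for i by (simp add: pos_part_def max_def)
  have pos0: "pos_part z i \<ge> 0" for i by (simp add: pos_part_def)
  have tot: "(\<Sum>i\<in>{1..n}. pos_part z i) = 1"
    using assms(3,4) by (simp add: pp sum_divide_distrib[symmetric] sum.distrib)
  have Pj: "P j \<ge> w j / 3" for j
  proof -
    define B where "B = bin n (pos_part z) j"
    have Bsub: "B \<subseteq> {1..n}" by (auto simp: B_def bin_def)
    have p0: "0 \<le> (1 / 2 ^ j :: real)" "(1 / 2 ^ j :: real) \<le> 1" by auto
    have "{S. S \<inter> B \<noteq> {}} \<subseteq> {S. \<exists>i\<in>S. pos_part z i \<ge> 1 / 2 ^ j}"
      by (auto simp: B_def bin_def powr_minus powr_realpow divide_inverse)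
    hence "measure_pmf.prob (random_subset n (1 / 2 ^ j)) {S. S \<inter> B \<noteq> {}} \<le> P j"
      unfolding P_def by (rule measure_pmf.finite_measure_mono) simp
    hence a: "P j \<ge> 1 - (1 - 1 / 2 ^ j) ^ card B" using prob_random_subset_hit[OF Bsub p0] by simp
    have "w j \<le> (\<Sum>i\<in>B. 2 powr (- real j + 1))"
      unfolding w_def B_def by (rule sum_mono) (auto simp: bin_def)
    also have "\<dots> = 2 * (card B * (1 / 2 ^ j))"
    proof -
      have "2 powr (- real j + 1) = 2 powr 1 / 2 powr real j"
        using powr_diff[of 2 1 "real j"] by simp
      also have "\<dots> = 2 / 2 ^ j" by (simp add: powr_realpow)
      finally show ?thesis by simp
    qed
    finally have b: "w j \<le> 2 * (card B * (1 / 2 ^ j))" .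
    have "w j \<le> (\<Sum>i\<in>{1..n}. pos_part z i)"
      unfolding w_def using Bsub[unfolded B_def] pos0 by (intro sum_mono2) auto
    hence c: "w j \<le> 1" using tot by simp
    show ?thesis using a hit_lower[OF p0 b c] by linarith
  qed
  have "measure_pmf.prob (sampling_experiment n L) {(j, S). \<exists>i\<in>S. pos_part z i \<ge> 1 / 2 ^ j}
      = (\<Sum>j\<in>{1..L}. P j) / L"
    unfolding sampling_experiment_def prob_bind_pmf P_def
    using L1 by (subst integral_pmf_of_set) (auto simp: vimage_def)
  also have "\<dots> \<ge> (\<Sum>j\<in>{1..L}. w j / 3) / L"
    using L1 Pj by (intro divide_right_mono sum_mono) auto
  finally have "measure_pmf.prob (sampling_experiment n L) {(j, S). \<exists>i\<in>S. pos_part z i \<ge> 1 / 2 ^ j}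
      \<ge> (\<Sum>j\<in>{1..L}. w j) / 3 / L" by (simp add: sum_divide_distrib)
  moreover have "(\<Sum>j\<in>{1..L}. w j) \<ge> 3 / 5" using assms(5) by (simp add: w_def L_def L'_def)
  ultimately have "measure_pmf.prob (sampling_experiment n L) {(j, S). \<exists>i\<in>S. pos_part z i \<ge> 1 / 2 ^ j}
      \<ge> 1 / 5 / L"
  proof -
    assume h1: "(\<Sum>j\<in>{1..L}. w j) / 3 / L \<le> measure_pmf.prob (sampling_experiment n L) {(j, S). \<exists>i\<in>S. pos_part z i \<ge> 1 / 2 ^ j}"
       and h2: "(\<Sum>j\<in>{1..L}. w j) \<ge> 3 / 5"
    have "1 / 5 / real L \<le> (\<Sum>j\<in>{1..L}. w j) / 3 / L"
      using h2 by (intro divide_right_mono) auto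
    thus ?thesis using h1 by linarith
  qed
  moreover have "1 / 5 / real L \<ge> 3 / (20 * L')"
    using L1 LL' L'1 by (simp add: field_simps)
  ultimately show ?thesis by (simp add: L_def L'_def)
qed

end
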